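(* Let $(X,d)$ be a separable metric space, $T\colon X\to X$ a Borel measurable map, $(s_n)_{n\ge1}$ a steady scale sequence, and $\mu,\nu$ two $T$-invariant $T$-ergodic Borel probability measures on $X$. Assume $T$ is a local contraction mod $\nu$. Then $\phi(x,y)=\liminf_{n\to\infty}s_n\,d(T^nx,y)$ is $\mu\times\nu$-almost everywhere constant.
   Context: A scale sequence is a sequence of positive reals $s_n\to\infty$; it is steady if $s_{n+1}/s_n\to1$. The dilation gauge is $D_T(x)=\limsup_{y\to x} d(Ty,Tx)/d(y,x)$ if $x$ is a limit point of $X$ and $D_T(x)=0$ if $x$ is isolated; $T$ is a local contraction mod $\nu$ if $D_T\le1$ $\nu$-a.e. *)

theory Defs
  imports "HOL-Probability.Probability"
begin

definition scale_sequence :: "(nat \<Rightarrow> real) \<Rightarrow> bool" where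
  "scale_sequence s \<longleftrightarrow> (\<forall>n. s n > 0) \<and> filterlim s at_top sequentially"

definition steady :: "(nat \<Rightarrow> real) \<Rightarrow> bool" where
  "steady s \<longleftrightarrow> ((\<lambda>n. s (Suc n) / s n) \<longlonglongrightarrow> 1)"

definition invariant_measure :: "('a::topological_space \<Rightarrow> 'a) \<Rightarrow> 'a measure \<Rightarrow> bool" where
  "invariant_measure T M \<longleftrightarrow> sets M = sets borel \<and> T \<in> borel_measurable M \<and>
     (\<forall>A \<in> sets borel. measure M (T -` A) = measure M A)"

definition ergodic_measure :: "('a::topological_space \<Rightarrow> 'a) \<Rightarrow> 'a measure \<Rightarrow> bool" where
  "ergodic_measure T M \<longleftrightarrow>
     (\<forall>A \<in> sets borel. T -` A = A \<longrightarrow> measure M A = 0 \<or> measure M A = 1)"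

definition dilation_gauge :: "('a::metric_space \<Rightarrow> 'a) \<Rightarrow> 'a \<Rightarrow> ereal" where
  "dilation_gauge T x =
     (if x islimpt UNIV
      then Limsup (at x) (\<lambda>y. ereal (dist (T y) (T x) / dist y x))
      else 0)"

definition local_contraction_mod :: "('a::metric_space \<Rightarrow> 'a) \<Rightarrow> 'a measure \<Rightarrow> bool" where
  "local_contraction_mod T N \<longleftrightarrow> (AE x in N. dilation_gauge T x \<le> 1)"

end

theory Submission
  imports Defs
begin


lemma liminf_le_freq:
  fixes f :: "nat \<Rightarrow> ereal"
  assumes "\<exists>\<^sub>F n in sequentially. f n < c"
  shows "liminf f \<le> c"
proof (rule ccontr)
  assume "\<not> liminf f \<le> c"
  then have "c < liminf f" by simp
  then have "eventually (\<lambda>n. c < f n) sequentially"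
    using le_Liminf_iff[of "liminf f" sequentially f] by auto
  then have "eventually (\<lambda>n. \<not> f n < c) sequentially"
    by (rule eventually_mono) auto
  with assms show False by (simp add: frequently_def)
qed

lemma freq_of_liminf_less:
  fixes f :: "nat \<Rightarrow> ereal"
  assumes "liminf f < c"
  shows "\<exists>\<^sub>F n in sequentially. f n < c"
proof -
  have "\<not> c \<le> liminf f" using assms by simp
  then obtain y where y: "y < c" "\<not> eventually (\<lambda>n. y < f n) sequentially"
    using le_Liminf_iff[of c sequentially f] by auto
  then have "\<exists>\<^sub>F n in sequentially. \<not> y < f n" by (simp add: frequently_def)
  then show ?thesis
    by (rule frequently_elim1) (use y in \<open>auto simp: not_less\<close>)
qed

lemma liminf_shift:
  fixes f :: "nat \<Rightarrow> ereal"
  shows "liminf (\<lambda>n. f (Suc n)) = liminf f"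
proof -
  have *: "eventually (\<lambda>x. y < f (Suc x)) sequentially = eventually (\<lambda>x. y < f x) sequentially" for y
    by (rule eventually_sequentially_Suc[of "\<lambda>x. y < f x"])
  have "C \<le> liminf (\<lambda>n. f (Suc n)) \<longleftrightarrow> C \<le> liminf f" for C
    by (simp add: le_Liminf_iff *)
  then show ?thesis by (metis order.antisym order.refl)
qed

lemma liminf_compare:
  fixes u v :: "nat \<Rightarrow> real"
  assumes u: "\<And>n. u n \<ge> 0" and v: "\<And>n. v n \<ge> 0"
    and ev: "\<And>m. m > 1 \<Longrightarrow> eventually (\<lambda>n. v n \<le> m * u n) sequentially"
  shows "liminf (\<lambda>n. ereal (v n)) \<le> liminf (\<lambda>n. ereal (u n))"
proof (rule dense_ge)
  fix y assume y: "liminf (\<lambda>n. ereal (u n)) < y"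
  show "liminf (\<lambda>n. ereal (v n)) \<le> y"
  proof (cases y)
    case PInf then show ?thesis by simp
  next
    case MInf then show ?thesis using y by simp
  next
    case (real t)
    have "0 \<le> liminf (\<lambda>n. ereal (u n))"
      by (rule Liminf_bounded) (use u in auto)
    obtain r1 where r1: "liminf (\<lambda>n. ereal (u n)) < ereal r1" "ereal r1 < y"
      using ereal_dense2[OF y] by auto
    have "(0::ereal) < ereal r1" using \<open>0 \<le> liminf _\<close> r1(1) by (rule order.strict_trans1)
    then have r1pos: "r1 > 0" by simp
    have "r1 < t" using r1 real by simp
    then have "t / r1 > 1" using r1pos by simp
    from ev[OF this] have e: "eventually (\<lambda>n. v n \<le> (t / r1) * u n) sequentially" .
    have f: "\<exists>\<^sub>F n in sequentially. ereal (u n) < ereal r1"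
      by (rule freq_of_liminf_less[OF r1(1)])
    have "\<exists>\<^sub>F n in sequentially. ereal (v n) < ereal t"
    proof (rule frequently_mp[OF _ f])
      show "\<forall>\<^sub>F n in sequentially. ereal (u n) < ereal r1 \<longrightarrow> ereal (v n) < ereal t"
      proof (rule eventually_mono[OF e], safe)
        fix n assume h: "v n \<le> t / r1 * u n" "ereal (u n) < ereal r1"
        have "t / r1 * u n < t / r1 * r1"
          using h(2) \<open>t / r1 > 1\<close> by (intro mult_strict_left_mono) auto
        then show "ereal (v n) < ereal t" using h(1) r1pos by simp
      qed
    qed
    then show ?thesis using real by (simp add: liminf_le_freq)
  qed
qed

definition phi :: "('a::metric_space \<Rightarrow> 'a) \<Rightarrow> (nat \<Rightarrow> real) \<Rightarrow> 'a \<Rightarrow> 'a \<Rightarrow> ereal" where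
  "phi T s x y = liminf (\<lambda>n. ereal (s n * dist ((T ^^ n) x) y))"

lemma phi_shift:
  assumes "scale_sequence s" "steady s"
  shows "phi T s (T x) y = phi T s x y"
proof -
  have spos: "\<And>n. s n > 0" using assms(1) by (simp add: scale_sequence_def)
  have lim: "(\<lambda>n. s (Suc n) / s n) \<longlonglongrightarrow> 1" using assms(2) by (simp add: steady_def)
  define e where "e n = dist ((T ^^ n) x) y" for n
  have e0: "e n \<ge> 0" for n by (simp add: e_def)
  have l1: "phi T s (T x) y = liminf (\<lambda>n. ereal (s n * e (Suc n)))"
    unfolding phi_def e_def by (simp only: funpow_Suc_right comp_def)
  have l2: "phi T s x y = liminf (\<lambda>n. ereal (s (Suc n) * e (Suc n)))"
    unfolding phi_def e_def by (rule liminf_shift[of "\<lambda>n. ereal (s n * dist ((T ^^ n) x) y)", symmetric])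
  have A: "liminf (\<lambda>n. ereal (s n * e (Suc n))) \<le> liminf (\<lambda>n. ereal (s (Suc n) * e (Suc n)))"
  proof (rule liminf_compare)
    fix m :: real assume m: "m > 1"
    have "1 / m < 1" using m by simp
    then have "eventually (\<lambda>n. 1 / m < s (Suc n) / s n) sequentially"
      using order_tendstoD(1)[OF lim \<open>1 / m < 1\<close>] by simp
    then show "eventually (\<lambda>n. s n * e (Suc n) \<le> m * (s (Suc n) * e (Suc n))) sequentially"
    proof (rule eventually_mono)
      fix n assume h: "1 / m < s (Suc n) / s n"
      have sl: "s n < m * s (Suc n)" using h m spos[of n] by (simp add: field_simps)
      then show "s n * e (Suc n) \<le> m * (s (Suc n) * e (Suc n))"
        using e0[of "Suc n"] mult_right_mono[OF less_imp_le[OF sl] e0[of "Suc n"]] by (simp add: mult.assoc)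
    qed
  qed (auto intro!: mult_nonneg_nonneg e0 less_imp_le[OF spos])
  have B: "liminf (\<lambda>n. ereal (s (Suc n) * e (Suc n))) \<le> liminf (\<lambda>n. ereal (s n * e (Suc n)))"
  proof (rule liminf_compare)
    fix m :: real assume m: "m > 1"
    have "eventually (\<lambda>n. s (Suc n) / s n < m) sequentially"
      by (rule order_tendstoD(2)[OF lim]) (use m in simp)
    then show "eventually (\<lambda>n. s (Suc n) * e (Suc n) \<le> m * (s n * e (Suc n))) sequentially"
    proof (rule eventually_mono)
      fix n assume h: "s (Suc n) / s n < m"
      have sl: "s (Suc n) < m * s n" using h spos[of n] by (simp add: field_simps)
      then show "s (Suc n) * e (Suc n) \<le> m * (s n * e (Suc n))"
        using e0[of "Suc n"] mult_right_mono[OF less_imp_le[OF sl] e0[of "Suc n"]] by (simp add: mult.assoc)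
    qed
  qed (auto intro!: mult_nonneg_nonneg e0 less_imp_le[OF spos])
  show ?thesis unfolding l1 l2 using A B by (rule order.antisym)
qed

lemma freq_Suc:
  assumes "\<exists>\<^sub>F n in sequentially. P (Suc n)"
  shows "\<exists>\<^sub>F n in sequentially. P n"
  using assms eventually_sequentially_Suc[of "\<lambda>n. \<not> P n"] by (simp add: frequently_def)

lemma phi_nonneg:
  assumes "scale_sequence s"
  shows "0 \<le> phi T s x y"
  unfolding phi_def
  by (intro Liminf_bounded always_eventually allI ereal_less_eq(5)[THEN iffD2] mult_nonneg_nonneg zero_le_dist)
    (use assms in \<open>auto simp: scale_sequence_def less_imp_le\<close>)

lemma local_lip:
  fixes T :: "'a::metric_space \<Rightarrow> 'a"
  assumes "dilation_gauge T y \<le> 1" "m > 1"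
  obtains \<eta> where "\<eta> > 0" "\<And>z. dist z y < \<eta> \<Longrightarrow> dist (T z) (T y) \<le> m * dist z y"
proof (cases "y islimpt UNIV")
  case True
  then have "Limsup (at y) (\<lambda>z. ereal (dist (T z) (T y) / dist z y)) < ereal m"
    using assms unfolding dilation_gauge_def by (simp add: order.strict_trans1)
  then have "eventually (\<lambda>z. ereal (dist (T z) (T y) / dist z y) < ereal m) (at y)"
    by (rule Limsup_lessD)
  then obtain d where d: "d > 0" "\<And>z. z \<noteq> y \<Longrightarrow> dist z y < d \<Longrightarrow> dist (T z) (T y) / dist z y < m"
    unfolding eventually_at by auto
  show ?thesis
  proof (rule that[OF d(1)])
    fix z assume z: "dist z y < d"
    show "dist (T z) (T y) \<le> m * dist z y"
    proof (cases "z = y")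
      case False
      then have "dist z y > 0" by simp
      with d(2)[OF False z] show ?thesis by (simp add: divide_less_eq)
    qed simp
  qed
next
  case False
  then obtain e where e: "e > 0" "\<And>z. z \<noteq> y \<Longrightarrow> \<not> dist z y < e"
    unfolding islimpt_approachable by auto
  show ?thesis
  proof (rule that[OF e(1)])
    fix z assume "dist z y < e"
    then have "z = y" using e(2) by blast
    then show "dist (T z) (T y) \<le> m * dist z y" by simp
  qed
qed

lemma phi_contr:
  fixes T :: "'a::metric_space \<Rightarrow> 'a"
  assumes ss: "scale_sequence s" and st: "steady s" and D: "dilation_gauge T y \<le> 1"
  shows "phi T s x (T y) \<le> phi T s x y"
proof (rule dense_ge)
  have spos: "\<And>n. s n > 0" using ss by (simp add: scale_sequence_def)
  have stop: "filterlim s at_top sequentially" using ss by (simp add: scale_sequence_def)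
  have lim: "(\<lambda>n. s (Suc n) / s n) \<longlonglongrightarrow> 1" using st by (simp add: steady_def)
  fix w assume w: "phi T s x y < w"
  show "phi T s x (T y) \<le> w"
  proof (cases w)
    case PInf then show ?thesis by simp
  next
    case MInf then show ?thesis using w by simp
  next
    case (real t)
    have p0: "0 \<le> phi T s x y" by (rule phi_nonneg[OF ss])
    obtain r1 where r1: "phi T s x y < ereal r1" "ereal r1 < w"
      using ereal_dense2[OF w] by auto
    have "(0::ereal) < ereal r1" using p0 r1(1) by (rule order.strict_trans1)
    then have r1pos: "r1 > 0" by simp
    have "r1 < t" using r1 real by simp
    then have k1: "t / r1 > 1" using r1pos by simp
    define m where "m = sqrt (t / r1)"
    have m1: "m > 1" unfolding m_def using k1 by simp
    have mm: "m * m = t / r1" unfolding m_def using k1 r1pos \<open>r1 < t\<close> by simp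
    obtain \<eta> where eta: "\<eta> > 0" "\<And>z. dist z y < \<eta> \<Longrightarrow> dist (T z) (T y) \<le> m * dist z y"
      using local_lip[OF D m1] by blast
    define d where "d n = dist ((T ^^ n) x) y" for n
    have f: "\<exists>\<^sub>F n in sequentially. ereal (s n * d n) < ereal r1"
      by (rule freq_of_liminf_less) (use r1(1) in \<open>simp only: phi_def d_def\<close>)
    have e1: "eventually (\<lambda>n. s (Suc n) / s n < m) sequentially"
      by (rule order_tendstoD(2)[OF lim]) (use m1 in simp)
    have e2: "eventually (\<lambda>n. r1 / \<eta> < s n) sequentially"
      using stop by (simp add: filterlim_at_top_dense)
    have "\<exists>\<^sub>F n in sequentially. ereal (s (Suc n) * dist ((T ^^ Suc n) x) (T y)) < ereal t"
    proof (rule frequently_mp[OF _ f])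
      show "\<forall>\<^sub>F n in sequentially. ereal (s n * d n) < ereal r1 \<longrightarrow>
              ereal (s (Suc n) * dist ((T ^^ Suc n) x) (T y)) < ereal t"
        using e1 e2
      proof eventually_elim
        case (elim n)
        show ?case
        proof
          assume a: "ereal (s n * d n) < ereal r1"
          then have a': "s n * d n < r1" by simp
          have sn: "s n > 0" "s (Suc n) > 0" using spos by auto
          have d0: "d n \<ge> 0" by (simp add: d_def)
          have b: "s (Suc n) < m * s n" using elim(1) sn by (simp add: divide_less_eq)
          have "r1 < \<eta> * s n" using elim(2) eta(1) by (simp add: divide_less_eq mult.commute)
          then have "s n * d n < s n * \<eta>" using a' by (simp add: mult.commute)
          then have "d n < \<eta>" using sn by simp
          then have h1: "dist (T ((T ^^ n) x)) (T y) \<le> m * d n" using eta(2) unfolding d_def by blast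
          have h2: "s (Suc n) * dist (T ((T ^^ n) x)) (T y) \<le> s (Suc n) * (m * d n)"
            using h1 sn by (intro mult_left_mono) auto
          have h3: "s (Suc n) * (m * d n) \<le> (m * s n) * (m * d n)"
            using b m1 d0 by (intro mult_right_mono) auto
          have h4: "(m * s n) * (m * d n) = (m * m) * (s n * d n)" by (simp add: algebra_simps)
          have h5: "(m * m) * (s n * d n) < (m * m) * r1"
            using a' m1 by (intro mult_strict_left_mono) auto
          have h6: "(m * m) * r1 = t" using mm r1pos by simp
          have "s (Suc n) * dist (T ((T ^^ n) x)) (T y) < t"
            using h2 h3 h4 h5 h6 by linarith
          then show "ereal (s (Suc n) * dist ((T ^^ Suc n) x) (T y)) < ereal t" by simp
        qed
      qed
    qed
    then have "\<exists>\<^sub>F n in sequentially. ereal (s n * dist ((T ^^ n) x) (T y)) < ereal t"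
      by (rule freq_Suc)
    then show ?thesis unfolding phi_def real by (rule liminf_le_freq)
  qed
qed



lemma funpow_meas: "T \<in> measurable M M \<Longrightarrow> (T ^^ n) \<in> measurable M M"
proof (induction n)
  case 0 then show ?case by simp
next
  case (Suc n)
  then show ?case using measurable_comp[OF Suc.IH Suc.prems] by simp
qed

lemma phi_meas1:
  fixes T :: "'a::metric_space \<Rightarrow> 'a"
  assumes "T \<in> borel_measurable borel"
  shows "(\<lambda>x. phi T s x y) \<in> borel_measurable borel"
  unfolding phi_def
proof (rule borel_measurable_liminf)
  fix n
  have c: "(\<lambda>z. dist z y) \<in> borel_measurable borel"
    by (intro borel_measurable_continuous_onI continuous_intros)
  have "(\<lambda>x. dist ((T ^^ n) x) y) \<in> borel_measurable borel"
    using measurable_comp[OF funpow_meas[OF assms] c] by (simp add: comp_def)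
  then show "(\<lambda>x. ereal (s n * dist ((T ^^ n) x) y)) \<in> borel_measurable borel"
    by (intro borel_measurable_ereal borel_measurable_times borel_measurable_const)
qed

lemma dist_meas:
  assumes "separable_space (euclidean :: 'a::metric_space topology)"
  shows "(\<lambda>z::'a\<times>'a. dist (fst z) (snd z)) \<in> borel_measurable (borel \<Otimes>\<^sub>M borel)"
proof -
  obtain C :: "'a set" where C: "countable C" "closure C = UNIV"
    using assms unfolding separable_space_def by auto
  have appr: "\<exists>q\<in>C. dist q x < e" if "e > 0" for x e
    using C(2) closure_approachable[of x C] that by auto
  have eq: "ereal (dist x y) = (INF q\<in>C. ereal (dist x q + dist q y))" for x y :: 'a
  proof (rule order.antisym)
    show "ereal (dist x y) \<le> (INF q\<in>C. ereal (dist x q + dist q y))"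
      by (rule INF_greatest) (simp add: dist_triangle)
    show "(INF q\<in>C. ereal (dist x q + dist q y)) \<le> ereal (dist x y)"
    proof (rule dense_ge)
      fix w assume w: "ereal (dist x y) < w"
      show "(INF q\<in>C. ereal (dist x q + dist q y)) \<le> w"
      proof (cases w)
        case PInf then show ?thesis by simp
      next
        case MInf then show ?thesis using w by simp
      next
        case (real t)
        then have "(t - dist x y) / 2 > 0" using w by simp
        from appr[OF this] obtain q where q: "q \<in> C" "dist q x < (t - dist x y) / 2" by auto
        have "dist q y \<le> dist q x + dist x y" by (rule dist_triangle)
        then have "dist x q + dist q y \<le> t" using q(2) by (simp add: dist_commute)
        then have "(INF q\<in>C. ereal (dist x q + dist q y)) \<le> ereal (dist x q + dist q y) \<and> ereal (dist x q + dist q y) \<le> ereal t"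
          using q(1) by (auto intro: INF_lower)
        then show ?thesis using real by (meson order.trans)
      qed
    qed
  qed
  have [measurable]: "(\<lambda>a. dist a q) \<in> borel_measurable borel" "(\<lambda>a. dist q a) \<in> borel_measurable borel" for q :: 'a
    by (intro borel_measurable_continuous_onI continuous_intros)+
  have m: "(\<lambda>z::'a\<times>'a. INF q\<in>C. ereal (dist (fst z) q + dist q (snd z))) \<in> borel_measurable (borel \<Otimes>\<^sub>M borel)"
    using C(1) by measurable
  have "(\<lambda>z::'a\<times>'a. real_of_ereal (INF q\<in>C. ereal (dist (fst z) q + dist q (snd z)))) \<in> borel_measurable (borel \<Otimes>\<^sub>M borel)"
    using m by (rule borel_measurable_real_of_ereal)
  moreover have "(\<lambda>z::'a\<times>'a. real_of_ereal (INF q\<in>C. ereal (dist (fst z) q + dist q (snd z)))) = (\<lambda>z. dist (fst z) (snd z))"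
    by (rule ext) (simp add: eq[symmetric])
  ultimately show ?thesis by simp
qed

lemma phi_meas2:
  fixes T :: "'a::metric_space \<Rightarrow> 'a"
  assumes "separable_space (euclidean :: 'a topology)" "T \<in> borel_measurable borel"
  shows "(\<lambda>z. phi T s (fst z) (snd z)) \<in> borel_measurable (borel \<Otimes>\<^sub>M borel)"
  unfolding phi_def
proof (rule borel_measurable_liminf)
  fix n
  have h: "(\<lambda>z::'a\<times>'a. ((T ^^ n) (fst z), snd z)) \<in> measurable (borel \<Otimes>\<^sub>M borel) (borel \<Otimes>\<^sub>M borel)"
  proof -
    have "(\<lambda>z::'a\<times>'a. (T ^^ n) (fst z)) \<in> borel_measurable (borel \<Otimes>\<^sub>M borel)"
      using measurable_comp[OF measurable_fst funpow_meas[OF assms(2)]] by (simp add: comp_def)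
    then show ?thesis by (intro measurable_Pair measurable_snd)
  qed
  have "(\<lambda>z::'a\<times>'a. dist ((T ^^ n) (fst z)) (snd z)) \<in> borel_measurable (borel \<Otimes>\<^sub>M borel)"
    using measurable_comp[OF h dist_meas[OF assms(1)]] by (simp add: comp_def)
  then show "(\<lambda>z. ereal (s n * dist ((T ^^ n) (fst z)) (snd z))) \<in> borel_measurable (borel \<Otimes>\<^sub>M borel)"
    by (intro borel_measurable_ereal borel_measurable_times borel_measurable_const)
qed

lemma rat_between_ereal:
  fixes a b :: ereal
  assumes "a < b"
  shows "\<exists>r\<in>\<rat>. a < ereal r \<and> ereal r < b"
proof -
  obtain t1 where t1: "a < ereal t1" "ereal t1 < b" using ereal_dense2[OF assms] by auto
  obtain t2 where t2: "ereal t1 < ereal t2" "ereal t2 < b" using ereal_dense2[OF t1(2)] by auto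
  then have "t1 < t2" by simp
  from Rats_dense_in_real[OF this] obtain r where r: "r \<in> \<rat>" "t1 < r" "r < t2" by auto
  have x1: "ereal t1 < ereal r" "ereal r < ereal t2" using r by simp_all
  have "a < ereal r" using t1(1) x1(1) by (rule less_trans)
  moreover have "ereal r < b" using x1(2) t2(2) by (rule less_trans)
  ultimately have "a < ereal r \<and> ereal r < b" by blast
  then show ?thesis using r(1) by blast
qed

lemma ae_const_from_thresholds:
  fixes g :: "'b \<Rightarrow> ereal"
  assumes H: "\<And>r::real. (AE z in M. g z < ereal r) \<or> (AE z in M. \<not> g z < ereal r)"
  shows "\<exists>c. AE z in M. g z = c"
proof -
  define Q where "Q r \<longleftrightarrow> (AE z in M. g z < ereal r)" for r
  define c where "c = Inf (ereal ` {r \<in> \<rat>. Q r})"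
  have "\<forall>r\<in>\<rat>. AE z in M. (g z < ereal r \<longleftrightarrow> Q r)"
  proof
    fix r :: real assume "r \<in> \<rat>"
    show "AE z in M. (g z < ereal r \<longleftrightarrow> Q r)"
    proof (cases "Q r")
      case True
      from True have "AE z in M. g z < ereal r" by (simp add: Q_def)
      then show ?thesis by (rule eventually_mono) (simp add: True)
    next
      case False
      then have "AE z in M. \<not> g z < ereal r" using H[of r] unfolding Q_def by auto
      then show ?thesis by (rule eventually_mono) (simp add: False)
    qed
  qed
  then have "AE z in M. \<forall>r\<in>\<rat>. (g z < ereal r \<longleftrightarrow> Q r)"
    by (subst AE_ball_countable) (auto simp: countable_rat)
  then have "AE z in M. g z = c"
  proof (rule eventually_mono)
    fix z assume Hz: "\<forall>r\<in>\<rat>. (g z < ereal r \<longleftrightarrow> Q r)"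
    show "g z = c"
    proof (rule linorder_cases[of "g z" c])
      assume "g z < c"
      from rat_between_ereal[OF this] obtain r where r: "r \<in> \<rat>" "g z < ereal r" "ereal r < c" by auto
      then have "Q r" using Hz by auto
      then have "c \<le> ereal r" unfolding c_def using r(1) by (auto intro: Inf_lower)
      then show ?thesis using r(3) by simp
    next
      assume "c < g z"
      from rat_between_ereal[OF this] obtain r where r: "r \<in> \<rat>" "c < ereal r" "ereal r < g z" by auto
      then obtain r' where r': "r' \<in> \<rat>" "Q r'" "ereal r' < ereal r"
        unfolding c_def Inf_less_iff by auto
      then have "g z < ereal r'" using Hz by auto
      then have "g z < ereal r" using r'(3) by (rule less_trans)
      then show ?thesis using r(3) by simp
    qed simp
  qed
  then show ?thesis by blast
qed



lemma inv_basic: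
  assumes "invariant_measure T \<nu>"
  shows "sets \<nu> = sets borel" "space \<nu> = UNIV" "T \<in> measurable borel borel"
    "\<And>A. A \<in> sets borel \<Longrightarrow> measure \<nu> (T -` A) = measure \<nu> A"
    "\<And>A. A \<in> sets borel \<Longrightarrow> T -` A \<in> sets borel"
proof -
  show s: "sets \<nu> = sets borel" using assms by (simp add: invariant_measure_def)
  show "space \<nu> = UNIV" using sets_eq_imp_space_eq[OF s] by simp
  have "T \<in> borel_measurable \<nu>" using assms by (simp add: invariant_measure_def)
  then show Tm: "T \<in> measurable borel borel" using measurable_cong_sets[of \<nu> borel borel borel, OF s refl] by metis
  show "\<And>A. A \<in> sets borel \<Longrightarrow> measure \<nu> (T -` A) = measure \<nu> A"
    using assms by (simp add: invariant_measure_def)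
  show "\<And>A. A \<in> sets borel \<Longrightarrow> T -` A \<in> sets borel"
    using measurable_sets[OF Tm] by simp
qed

lemma AE_T:
  assumes P: "prob_space \<nu>" and I: "invariant_measure T \<nu>" and A: "AE y in \<nu>. Q y"
  shows "AE y in \<nu>. Q (T y)"
proof -
  interpret prob_space \<nu> by (rule P)
  note b = inv_basic[OF I]
  from A obtain N where N: "{x \<in> space \<nu>. \<not> Q x} \<subseteq> N" "emeasure \<nu> N = 0" "N \<in> sets \<nu>"
    by (rule AE_E)
  have Nb: "N \<in> sets borel" using N(3) b(1) by simp
  have TN: "T -` N \<in> sets \<nu>" using b(5)[OF Nb] b(1) by simp
  have "measure \<nu> N = 0" using N(2) by (simp add: measure_def)
  then have "measure \<nu> (T -` N) = 0" using b(4)[OF Nb] by simp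
  then have "emeasure \<nu> (T -` N) = 0" using TN by (simp add: emeasure_eq_measure)
  moreover have "{x \<in> space \<nu>. \<not> Q (T x)} \<subseteq> T -` N" using N(1) b(2) by auto
  ultimately show ?thesis using TN by (intro AE_I) auto
qed

lemma invariant_01:
  fixes T :: "'a::topological_space \<Rightarrow> 'a"
  assumes P: "prob_space \<nu>" and I: "invariant_measure T \<nu>" and E: "ergodic_measure T \<nu>"
    and B: "B \<in> sets borel" and sub: "AE y in \<nu>. y \<in> B \<longrightarrow> T y \<in> B"
  shows "measure \<nu> B = 0 \<or> measure \<nu> B = 1"
proof -
  interpret prob_space \<nu> by (rule P)
  note b = inv_basic[OF I]
  have TB: "T -` B \<in> sets borel" by (rule b(5)[OF B])
  have Bn: "B \<in> sets \<nu>" "T -` B \<in> sets \<nu>" using B TB b(1) by auto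
  have "{y \<in> space \<nu>. \<not> (y \<in> B \<longrightarrow> T y \<in> B)} = B - T -` B" using b(2) by auto
  then have "emeasure \<nu> (B - T -` B) = 0" using sub AE_iff_measurable[of "B - T -` B" \<nu>] Bn by auto
  then have m1: "measure \<nu> (B - T -` B) = 0" by (simp add: measure_def)
  have "measure \<nu> (T -` B - B) = measure \<nu> (T -` B) - measure \<nu> (T -` B \<inter> B)"
    using Bn by (simp add: finite_measure_Diff')
  also have "\<dots> = measure \<nu> B - measure \<nu> (B \<inter> T -` B)"
    using b(4)[OF B] by (simp add: Int_commute)
  also have "\<dots> = measure \<nu> (B - T -` B)" using Bn by (simp add: finite_measure_Diff')
  finally have "measure \<nu> (T -` B - B) = 0" using m1 by simp
  then have "emeasure \<nu> (T -` B - B) = 0" using Bn by (simp add: emeasure_eq_measure)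
  moreover have "{y \<in> space \<nu>. \<not> (T y \<in> B \<longrightarrow> y \<in> B)} = T -` B - B" using b(2) by auto
  ultimately have sup: "AE y in \<nu>. T y \<in> B \<longrightarrow> y \<in> B"
    using AE_iff_measurable[of "T -` B - B" \<nu>] Bn by auto
  have s2: "AE y in \<nu>. (T y \<in> B \<longleftrightarrow> y \<in> B)" using sub sup by eventually_elim auto
  have s3: "AE y in \<nu>. ((T ^^ k) y \<in> B \<longleftrightarrow> y \<in> B)" for k
  proof (induction k)
    case 0 then show ?case by simp
  next
    case (Suc k)
    have "AE y in \<nu>. ((T ^^ k) (T y) \<in> B \<longleftrightarrow> T y \<in> B)" by (rule AE_T[OF P I Suc.IH])
    then show ?case using s2 by eventually_elim (simp add: funpow_Suc_right del: funpow.simps)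
  qed
  have s4: "AE y in \<nu>. \<forall>k. ((T ^^ k) y \<in> B \<longleftrightarrow> y \<in> B)"
    using s3 by (simp add: AE_all_countable)
  define A where "A = {y. \<forall>m. \<exists>k\<ge>m. (T ^^ k) y \<in> B}"
  have pre: "(T ^^ k) -` B \<in> sets borel" for k
    using measurable_sets[OF funpow_meas[OF b(3)] B, of k] by simp
  have "A = (\<Inter>m. \<Union>k\<in>{m..}. (T ^^ k) -` B)" unfolding A_def by (auto simp: Bex_def)
  then have Ab: "A \<in> sets borel" using pre by auto
  have "T -` A = A"
  proof (intro set_eqI iffI)
    fix y assume "y \<in> T -` A"
    then have h: "\<forall>m. \<exists>k\<ge>m. (T ^^ k) (T y) \<in> B" unfolding A_def by auto
    have "\<exists>k\<ge>m. (T ^^ k) y \<in> B" for m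
    proof -
      obtain k where "k \<ge> m" "(T ^^ k) (T y) \<in> B" using h by blast
      then show ?thesis by (intro exI[of _ "Suc k"]) (auto simp: funpow_Suc_right simp del: funpow.simps)
    qed
    then show "y \<in> A" unfolding A_def by auto
  next
    fix y assume "y \<in> A"
    then have h: "\<forall>m. \<exists>k\<ge>m. (T ^^ k) y \<in> B" unfolding A_def by auto
    have "\<exists>k\<ge>m. (T ^^ k) (T y) \<in> B" for m
    proof -
      obtain k where k: "k \<ge> Suc m" "(T ^^ k) y \<in> B" using h by blast
      then obtain k' where k': "k = Suc k'" by (cases k) auto
      have "(T ^^ k') (T y) = (T ^^ k) y" unfolding k' by (simp add: funpow_Suc_right del: funpow.simps)
      then show ?thesis using k k' by (intro exI[of _ k']) auto
    qed
    then show "y \<in> T -` A" unfolding A_def by auto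
  qed
  then have A01: "measure \<nu> A = 0 \<or> measure \<nu> A = 1" using E Ab by (simp add: ergodic_measure_def)
  have "AE y in \<nu>. y \<in> A \<longleftrightarrow> y \<in> B"
    using s4 by eventually_elim (auto simp: A_def)
  then have "emeasure \<nu> A = emeasure \<nu> B" using Ab B b(1) by (intro emeasure_eq_AE) auto
  then have "measure \<nu> A = measure \<nu> B" by (simp add: measure_def)
  then show ?thesis using A01 by simp
qed



theorem theorem6p5:
  fixes T :: "'a::metric_space \<Rightarrow> 'a"
    and s :: "nat \<Rightarrow> real"
    and \<mu> \<nu> :: "'a measure"
  assumes "separable_space (euclidean :: 'a topology)"
    and "T \<in> borel_measurable borel"
    and "scale_sequence s" and "steady s"
    and "prob_space \<mu>" and "prob_space \<nu>"
    and "invariant_measure T \<mu>" and "invariant_measure T \<nu>"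
    and "ergodic_measure T \<mu>" and "ergodic_measure T \<nu>"
    and "local_contraction_mod T \<nu>"
  shows "\<exists>c :: ereal. AE z in (\<mu> \<Otimes>\<^sub>M \<nu>).
           liminf (\<lambda>n. ereal (s n * dist ((T ^^ n) (fst z)) (snd z))) = c"
proof -
  note sep = assms(1) and Tm = assms(2) and ss = assms(3) and st = assms(4)
  note Pm = assms(5) and Pn = assms(6) and Im = assms(7) and In = assms(8)
  note Em = assms(9) and En = assms(10) and LC = assms(11)
  interpret P: pair_prob_space \<mu> \<nu>
    using Pm Pn by (simp add: pair_prob_space_def pair_sigma_finite_def prob_space_imp_sigma_finite)
  note bm = inv_basic[OF Im] and bn = inv_basic[OF In]
  have sets_prod: "sets (\<mu> \<Otimes>\<^sub>M \<nu>) = sets (borel \<Otimes>\<^sub>M borel)"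
    using bm(1) bn(1) by (rule sets_pair_measure_cong)
  have space_prod: "space (\<mu> \<Otimes>\<^sub>M \<nu>) = UNIV" by (simp add: space_pair_measure bm(2) bn(2))
  define F where "F z = phi T s (fst z) (snd z)" for z
  have Fm: "F \<in> borel_measurable (\<mu> \<Otimes>\<^sub>M \<nu>)"
    using phi_meas2[OF sep Tm, of s] measurable_cong_sets[OF sets_prod refl[of "sets (borel :: ereal measure)"]]
    unfolding F_def by metis
  have main: "(AE z in \<mu> \<Otimes>\<^sub>M \<nu>. F z < ereal r) \<or> (AE z in \<mu> \<Otimes>\<^sub>M \<nu>. \<not> F z < ereal r)" for r
  proof -
    define E where "E = {z \<in> space (\<mu> \<Otimes>\<^sub>M \<nu>). phi T s (fst z) (snd z) < ereal r}"
    have Es: "E \<in> sets (\<mu> \<Otimes>\<^sub>M \<nu>)"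
      using measurable_sets[OF Fm, of "{..<ereal r}"] unfolding E_def F_def by (simp add: space_prod vimage_def)
    have Ecs: "{z \<in> space (\<mu> \<Otimes>\<^sub>M \<nu>). \<not> phi T s (fst z) (snd z) < ereal r} \<in> sets (\<mu> \<Otimes>\<^sub>M \<nu>)"
      using measurable_sets[OF Fm, of "{ereal r..}"] unfolding F_def by (simp add: space_prod vimage_def not_less)
    define S where "S y = {x. phi T s x y < ereal r}" for y
    have Sb: "S y \<in> sets borel" for y
      using measurable_sets[OF phi_meas1[OF Tm, of s y], of "{..<ereal r}"] unfolding S_def by (simp add: vimage_def)
    have Sm: "S y \<in> sets \<mu>" for y using Sb bm(1) by simp
    have ST: "T -` S y = S y" for y unfolding S_def using phi_shift[OF ss st, of T] by auto
    have S01: "(AE x in \<mu>. x \<in> S y) \<or> (AE x in \<mu>. x \<notin> S y)" for y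
    proof -
      have "measure \<mu> (S y) = 0 \<or> measure \<mu> (S y) = 1"
        using Em Sb ST by (simp add: ergodic_measure_def)
      then show ?thesis
      proof
        assume "measure \<mu> (S y) = 1"
        then have "AE x in \<mu>. x \<in> S y" using P.M1.prob_eq_1[OF Sm] by simp
        then show ?thesis ..
      next
        assume "measure \<mu> (S y) = 0"
        then have "emeasure \<mu> (S y) = 0" using Sm by (simp add: P.M1.emeasure_eq_measure)
        then have "AE x in \<mu>. x \<notin> S y"
          using AE_iff_measurable[OF Sm, of "\<lambda>x. x \<notin> S y"] bm(2) by auto
        then show ?thesis ..
      qed
    qed
    have sec: "(\<lambda>x. (x, y)) -` E = S y" for y unfolding E_def S_def by (auto simp: space_prod)
    have fm: "(\<lambda>y. emeasure \<mu> (S y)) \<in> borel_measurable \<nu>"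
      using P.measurable_emeasure_Pair2[OF Es] by (simp add: sec)
    define B where "B = {y. emeasure \<mu> (S y) = 1}"
    have "(\<lambda>y. emeasure \<mu> (S y)) -` {1} \<inter> space \<nu> \<in> sets \<nu>"
      by (rule measurable_sets[OF fm]) simp
    then have Bn: "B \<in> sets \<nu>" unfolding B_def by (simp add: bn(2) vimage_def)
    then have Bb: "B \<in> sets borel" using bn(1) by simp
    have Biff: "y \<in> B \<longleftrightarrow> (AE x in \<mu>. x \<in> S y)" for y
      unfolding B_def using P.M1.prob_eq_1[OF Sm, of y] Sm[of y]
      by (simp add: P.M1.emeasure_eq_measure)
    have contr: "AE y in \<nu>. \<forall>x. phi T s x (T y) \<le> phi T s x y"
      using LC unfolding local_contraction_mod_def
      by (rule eventually_mono) (auto intro: phi_contr[OF ss st])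
    have sub: "AE y in \<nu>. y \<in> B \<longrightarrow> T y \<in> B"
      using contr
    proof (rule eventually_mono, intro impI)
      fix y assume c: "\<forall>x. phi T s x (T y) \<le> phi T s x y" and "y \<in> B"
      then have "AE x in \<mu>. x \<in> S y" using Biff by simp
      then have "AE x in \<mu>. x \<in> S (T y)"
        by (rule eventually_mono) (use c in \<open>auto simp: S_def intro: le_less_trans\<close>)
      then show "T y \<in> B" using Biff by simp
    qed
    have "measure \<nu> B = 0 \<or> measure \<nu> B = 1" by (rule invariant_01[OF Pn In En Bb sub])
    then show ?thesis
    proof
      assume "measure \<nu> B = 1"
      then have "AE y in \<nu>. y \<in> B" using P.M2.prob_eq_1[OF Bn] by simp
      then have "AE y in \<nu>. AE x in \<mu>. phi T s x y < ereal r"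
        by (rule eventually_mono) (simp add: Biff S_def)
      then have "AE x in \<mu>. AE y in \<nu>. phi T s x y < ereal r"
        using P.AE_commute[of "\<lambda>x y. phi T s x y < ereal r"] Es unfolding E_def by simp
      then have "AE z in \<mu> \<Otimes>\<^sub>M \<nu>. phi T s (fst z) (snd z) < ereal r"
        using P.AE_pair_iff[of "\<lambda>x y. phi T s x y < ereal r"] Es unfolding E_def by simp
      then show ?thesis unfolding F_def by simp
    next
      assume "measure \<nu> B = 0"
      then have "emeasure \<nu> B = 0" using Bn by (simp add: P.M2.emeasure_eq_measure)
      then have "AE y in \<nu>. y \<notin> B"
        using AE_iff_measurable[OF Bn, of "\<lambda>y. y \<notin> B"] bn(2) by auto
      then have "AE y in \<nu>. AE x in \<mu>. \<not> phi T s x y < ereal r"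
      proof (rule eventually_mono)
        fix y assume "y \<notin> B"
        then have "AE x in \<mu>. x \<notin> S y" using S01[of y] Biff[of y] by auto
        then show "AE x in \<mu>. \<not> phi T s x y < ereal r" by (simp add: S_def)
      qed
      then have "AE x in \<mu>. AE y in \<nu>. \<not> phi T s x y < ereal r"
        using P.AE_commute[of "\<lambda>x y. \<not> phi T s x y < ereal r"] Ecs by simp
      then have "AE z in \<mu> \<Otimes>\<^sub>M \<nu>. \<not> phi T s (fst z) (snd z) < ereal r"
        using P.AE_pair_iff[of "\<lambda>x y. \<not> phi T s x y < ereal r"] Ecs by simp
      then show ?thesis unfolding F_def by simp
    qed
  qed
  from ae_const_from_thresholds[OF main] obtain c where
    "AE z in \<mu> \<Otimes>\<^sub>M \<nu>. F z = c" by blast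
  then show ?thesis unfolding F_def phi_def by blast
qed

end
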